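(* For every finite simple graph $G$, $\chi_s(G)\le \tau(G)$.
   Context: $\tau(G)$ denotes the number of vertices in a longest path of $G$. A star colouring of $G$ is a proper vertex colouring in which every path on four vertices uses at least three distinct colours; the star chromatic number $\chi_s(G)$ is the least number of colours in a star colouring of $G$. *)

theory Defs
  imports Main
begin

definition simple_graph :: "'a set \<Rightarrow> ('a \<Rightarrow> 'a \<Rightarrow> bool) \<Rightarrow> bool" where
  "simple_graph V E \<longleftrightarrow> finite V \<and> (\<forall>u v. E u v \<longrightarrow> u \<in> V \<and> v \<in> V)
     \<and> (\<forall>u v. E u v \<longrightarrow> E v u) \<and> (\<forall>u. \<not> E u u)"

definition is_path :: "'a set \<Rightarrow> ('a \<Rightarrow> 'a \<Rightarrow> bool) \<Rightarrow> 'a list \<Rightarrow> bool" where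
  "is_path V E xs \<longleftrightarrow> xs \<noteq> [] \<and> distinct xs \<and> set xs \<subseteq> V
     \<and> (\<forall>i. Suc i < length xs \<longrightarrow> E (xs ! i) (xs ! Suc i))"

text \<open>tau(G): number of vertices of a longest path (0 for the empty graph).\<close>

definition longest_path :: "'a set \<Rightarrow> ('a \<Rightarrow> 'a \<Rightarrow> bool) \<Rightarrow> nat" where
  "longest_path V E = Max ({0} \<union> length ` {xs. is_path V E xs})"

definition star_colouring :: "'a set \<Rightarrow> ('a \<Rightarrow> 'a \<Rightarrow> bool) \<Rightarrow> ('a \<Rightarrow> nat) \<Rightarrow> nat \<Rightarrow> bool" where
  "star_colouring V E c k \<longleftrightarrow> (\<forall>v\<in>V. c v < k)
     \<and> (\<forall>u v. E u v \<longrightarrow> c u \<noteq> c v)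
     \<and> (\<forall>xs. is_path V E xs \<and> length xs = 4 \<longrightarrow> card (c ` set xs) \<ge> 3)"

definition star_chromatic :: "'a set \<Rightarrow> ('a \<Rightarrow> 'a \<Rightarrow> bool) \<Rightarrow> nat" where
  "star_chromatic V E = (LEAST k. \<exists>c. star_colouring V E c k)"

end

theory Submission
  imports Defs
begin

definition reach :: "('a \<Rightarrow> 'a \<Rightarrow> bool) \<Rightarrow> 'a set \<Rightarrow> 'a \<Rightarrow> 'a \<Rightarrow> bool" where
  "reach E U = (\<lambda>a b. E a b \<and> a \<in> U \<and> b \<in> U)\<^sup>*\<^sup>*"

definition struct :: "('a\<Rightarrow>'a\<Rightarrow>bool) \<Rightarrow> 'a set \<Rightarrow> ('a\<Rightarrow>nat) \<Rightarrow> ('a\<Rightarrow>'a\<Rightarrow>bool) \<Rightarrow> 'a set \<Rightarrow> bool" where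
  "struct E W c anc N \<longleftrightarrow> (\<forall>u v. E u v \<and> u\<in>W \<and> v\<in>W \<longrightarrow> anc u v \<or> anc v u)
    \<and> (\<forall>u v. anc u v \<longrightarrow> u\<in>W \<and> v\<in>W \<and> c u < c v)
    \<and> (\<forall>u v w. anc u w \<and> anc v w \<longrightarrow> u = v \<or> anc u v \<or> anc v u)
    \<and> (\<forall>u v w. anc u v \<and> anc v w \<longrightarrow> anc u w)
    \<and> (\<forall>v\<in>W. \<exists>xs. is_path W E xs \<and> last xs = v \<and> length xs = Suc (c v) \<and> hd xs \<in> N)"

lemma reach_closed:
  assumes "(\<lambda>a b. E a b \<and> a\<in>U \<and> b\<in>U)\<^sup>*\<^sup>* x y" "x \<in> S"
    "\<forall>u v. u\<in>S \<and> v\<in>U \<and> E u v \<longrightarrow> v\<in>S"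
  shows "(\<lambda>a b. E a b \<and> a\<in>S \<and> b\<in>S)\<^sup>*\<^sup>* x y \<and> y \<in> S"
  using assms(1)
proof (induction rule: rtranclp_induct)
  case base thus ?case using assms(2) by simp
next
  case (step y z)
  then have "z \<in> S" using assms(3) by blast
  thus ?case using step by (auto intro: rtranclp.rtrancl_into_rtrancl)
qed

lemma reach_sym:
  assumes "\<forall>u v. E u v \<longrightarrow> E v u" "(\<lambda>a b. E a b \<and> a\<in>U \<and> b\<in>U)\<^sup>*\<^sup>* x y"
  shows "(\<lambda>a b. E a b \<and> a\<in>U \<and> b\<in>U)\<^sup>*\<^sup>* y x"
  using assms(2)
proof (induction rule: rtranclp_induct)
  case base thus ?case by simp
next
  case (step y z)
  thus ?case using assms(1) by (auto intro: converse_rtranclp_into_rtranclp)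
qed

lemma is_path_mono: "is_path U E xs \<Longrightarrow> U \<subseteq> U' \<Longrightarrow> is_path U' E xs"
  unfolding is_path_def by auto

lemma is_path_Cons:
  assumes "is_path U E xs" "r \<notin> set xs" "r \<in> U'" "E r (hd xs)" "U \<subseteq> U'"
  shows "is_path U' E (r # xs)"
  using assms unfolding is_path_def
  by (auto simp: nth_Cons hd_conv_nth split: nat.splits)

lemma main:
  assumes sg: "simple_graph V E"
  shows "finite W \<Longrightarrow> (\<forall>v\<in>W. \<exists>n\<in>N. reach E W v n) \<Longrightarrow> \<exists>c anc. struct E W c anc N"
proof (induction "card W" arbitrary: W N rule: less_induct)
  case less
  have symE: "\<forall>u v. E u v \<longrightarrow> E v u" and irr: "\<forall>u. \<not> E u u"
    using sg unfolding simple_graph_def by auto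
  show ?case
  proof (cases "W = {}")
    case True
    show ?thesis
      by (rule exI[of _ "\<lambda>_. 0"], rule exI[of _ "\<lambda>_ _. False"]) (simp add: struct_def True)
  next
    case False
    then obtain w where "w \<in> W" by blast
    then obtain r where rN: "r \<in> N" and rw: "reach E W w r" using less.prems by blast
    have rW: "r \<in> W" using reach_closed[of E W w r W] rw \<open>w \<in> W\<close> unfolding reach_def by blast
    define W' where "W' = W - {r}"
    define A where "A = {x\<in>W'. \<exists>m\<in>W'. E r m \<and> reach E W' x m}"
    define B where "B = W' - A"
    have AW': "A \<subseteq> W'" and BW': "B \<subseteq> W'" unfolding A_def B_def by auto
    have finW': "finite W'" using less.prems(1) W'_def by simp
    have "A \<subset> W" using AW' rW unfolding W'_def by auto
    hence cardA: "card A < card W" using less.prems(1) by (simp add: psubset_card_mono)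
    have "B \<subset> W" using BW' rW unfolding W'_def by auto
    hence cardB: "card B < card W" using less.prems(1) by (simp add: psubset_card_mono)
    have finA: "finite A" and finB: "finite B" using finW' AW' BW' finite_subset by auto
    have rA: "r \<notin> A" and rB: "r \<notin> B" and AB: "A \<inter> B = {}"
      unfolding A_def B_def W'_def by auto
    have nbrA: "m \<in> A" if "E r m" "m \<in> W" for m
    proof -
      have "m \<noteq> r" using irr that by auto
      thus ?thesis using that unfolding A_def W'_def reach_def by auto
    qed
    have closedA: "\<forall>u v. u\<in>A \<and> v\<in>W' \<and> E u v \<longrightarrow> v\<in>A"
    proof (intro allI impI)
      fix u v assume h: "u\<in>A \<and> v\<in>W' \<and> E u v"
      then obtain m where m: "m \<in> W'" "E r m" "reach E W' u m" unfolding A_def by auto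
      have "reach E W' v m" using m(3) h symE AW' unfolding reach_def
        by (auto intro: converse_rtranclp_into_rtranclp)
      thus "v \<in> A" using h m unfolding A_def by auto
    qed
    have closedB: "\<forall>u v. u\<in>B \<and> v\<in>W \<and> E u v \<longrightarrow> v\<in>B"
    proof (intro allI impI)
      fix u v assume h: "u\<in>B \<and> v\<in>W \<and> E u v"
      show "v \<in> B"
      proof (cases "v = r")
        case True
        hence "u \<in> A" using nbrA h symE BW' W'_def by auto
        thus ?thesis using h AB by auto
      next
        case False
        hence "v \<in> W'" using h W'_def by auto
        moreover have "v \<notin> A" using closedA h symE BW' AB by blast
        ultimately show ?thesis unfolding B_def by auto
      qed
    qed
    define NA where "NA = {m\<in>W'. E r m}"
    have "\<forall>v\<in>A. \<exists>n\<in>NA. reach E A v n"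
    proof
      fix x assume "x \<in> A"
      then obtain m where m: "m \<in> W'" "E r m" "reach E W' x m" unfolding A_def by auto
      have "reach E A x m" using reach_closed[of E W' x m A] m(3) \<open>x\<in>A\<close> closedA
        unfolding reach_def by blast
      thus "\<exists>n\<in>NA. reach E A x n" using m NA_def by auto
    qed
    then obtain cA ancA where sA: "struct E A cA ancA NA"
      using less.hyps[OF cardA finA] by blast
    have "\<forall>v\<in>B. \<exists>n\<in>N. reach E B v n"
    proof
      fix x assume "x \<in> B"
      then obtain n where n: "n \<in> N" "reach E W x n" using less.prems(2) BW' W'_def by blast
      have "reach E B x n" using reach_closed[of E W x n B] n(2) \<open>x\<in>B\<close> closedB
        unfolding reach_def by blast
      thus "\<exists>n\<in>N. reach E B x n" using n by auto
    qed
    then obtain cB ancB where sB: "struct E B cB ancB N"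
      using less.hyps[OF cardB finB] by blast
    define c where "c = (\<lambda>v. if v = r then 0 else if v \<in> A then Suc (cA v) else cB v)"
    define anc where "anc = (\<lambda>u v. (u = r \<and> v \<in> A) \<or> (u\<in>A \<and> v\<in>A \<and> ancA u v) \<or> (u\<in>B \<and> v\<in>B \<and> ancB u v))"
    have WU: "W = insert r (A \<union> B)" using rW unfolding B_def W'_def using AW' W'_def by auto
    have s1: "\<forall>u v. E u v \<and> u\<in>W \<and> v\<in>W \<longrightarrow> anc u v \<or> anc v u"
    proof (intro allI impI)
      fix u v assume h: "E u v \<and> u\<in>W \<and> v\<in>W"
      show "anc u v \<or> anc v u"
      proof (cases "u = r")
        case True thus ?thesis using nbrA h anc_def by auto
      next
        case ur: False
        show ?thesis
        proof (cases "v = r")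
          case True thus ?thesis using nbrA h anc_def symE by auto
        next
          case vr: False
          hence uv: "u \<in> W'" "v \<in> W'" using ur h W'_def by auto
          show ?thesis
          proof (cases "u \<in> A")
            case True
            hence "v \<in> A" using closedA uv h by blast
            thus ?thesis using sA True h unfolding struct_def anc_def by blast
          next
            case False
            hence "u \<in> B" using uv B_def by auto
            moreover hence "v \<in> B" using closedB h by blast
            ultimately show ?thesis using sB h unfolding struct_def anc_def by blast
          qed
        qed
      qed
    qed
    have cB': "\<And>v. v \<in> B \<Longrightarrow> c v = cB v" using rB AB unfolding c_def by auto
    have cA': "\<And>v. v \<in> A \<Longrightarrow> c v = Suc (cA v)" using rA unfolding c_def by auto
    have A2': "\<And>u v. ancA u v \<Longrightarrow> cA u < cA v" using sA unfolding struct_def by blast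
    have B2': "\<And>u v. ancB u v \<Longrightarrow> cB u < cB v" using sB unfolding struct_def by blast
    have A2: "\<And>u v. ancA u v \<Longrightarrow> u\<in>A \<and> v\<in>A" using sA unfolding struct_def by blast
    have B2: "\<And>u v. ancB u v \<Longrightarrow> u\<in>B \<and> v\<in>B" using sB unfolding struct_def by blast
    have cr: "c r = 0" unfolding c_def by simp
    have s2: "\<forall>u v. anc u v \<longrightarrow> u\<in>W \<and> v\<in>W \<and> c u < c v"
    proof (intro allI impI)
      fix u v assume "anc u v"
      then consider "u = r" "v \<in> A" | "u\<in>A" "v\<in>A" "ancA u v" | "u\<in>B" "v\<in>B" "ancB u v"
        unfolding anc_def by blast
      thus "u\<in>W \<and> v\<in>W \<and> c u < c v"
      proof cases
        case 1 thus ?thesis using cr cA' rW WU by auto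
      next
        case 2 thus ?thesis using cA' A2' WU by auto
      next
        case 3 thus ?thesis using cB' B2' WU by auto
      qed
    qed
    have A3: "\<And>u v w. ancA u w \<Longrightarrow> ancA v w \<Longrightarrow> u = v \<or> ancA u v \<or> ancA v u" using sA unfolding struct_def by blast
    have B3: "\<And>u v w. ancB u w \<Longrightarrow> ancB v w \<Longrightarrow> u = v \<or> ancB u v \<or> ancB v u" using sB unfolding struct_def by blast
    have A4: "\<And>u v w. ancA u v \<Longrightarrow> ancA v w \<Longrightarrow> ancA u w" using sA unfolding struct_def by blast
    have B4: "\<And>u v w. ancB u v \<Longrightarrow> ancB v w \<Longrightarrow> ancB u w" using sB unfolding struct_def by blast
    have s3: "\<forall>u v w. anc u w \<and> anc v w \<longrightarrow> u = v \<or> anc u v \<or> anc v u"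
    proof (intro allI impI)
      fix u v w assume h: "anc u w \<and> anc v w"
      show "u = v \<or> anc u v \<or> anc v u"
      proof (cases "w \<in> A")
        case True
        hence "(u = r \<or> ancA u w) \<and> (v = r \<or> ancA v w)" using h AB rA unfolding anc_def by auto
        thus ?thesis using A2 A3[of u w v] unfolding anc_def by auto
      next
        case False
        hence "ancB u w \<and> ancB v w" using h unfolding anc_def by auto
        thus ?thesis using B2 B3[of u w v] unfolding anc_def by auto
      qed
    qed
    have s4: "\<forall>u v w. anc u v \<and> anc v w \<longrightarrow> anc u w"
    proof (intro allI impI)
      fix u v w assume h: "anc u v \<and> anc v w"
      show "anc u w"
      proof (cases "w \<in> A")
        case True
        hence "(v = r \<or> ancA v w)" using h AB rA unfolding anc_def by auto
        thus ?thesis using h A2 B2 A4[of u v w] rA rB AB True unfolding anc_def by blast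
      next
        case False
        hence "ancB v w" using h unfolding anc_def by auto
        thus ?thesis using h B2 B4[of u v w] AB rA rB unfolding anc_def by auto
      qed
    qed
    have s5: "\<forall>v\<in>W. \<exists>xs. is_path W E xs \<and> last xs = v \<and> length xs = Suc (c v) \<and> hd xs \<in> N"
    proof
      fix v assume "v \<in> W"
      hence "v = r \<or> v \<in> A \<or> v \<in> B" using WU by auto
      thus "\<exists>xs. is_path W E xs \<and> last xs = v \<and> length xs = Suc (c v) \<and> hd xs \<in> N"
      proof (elim disjE)
        assume "v = r"
        thus ?thesis using rW rN by (intro exI[of _ "[r]"]) (auto simp: is_path_def c_def)
      next
        assume vA: "v \<in> A"
        then obtain xs where xs: "is_path A E xs" "last xs = v" "length xs = Suc (cA v)" "hd xs \<in> NA"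
          using sA unfolding struct_def by blast
        have "r \<notin> set xs" using xs(1) rA unfolding is_path_def by auto
        moreover have "E r (hd xs)" using xs(4) NA_def by auto
        moreover have "A \<subseteq> W" using WU by auto
        ultimately have "is_path W E (r # xs)" using is_path_Cons[OF xs(1) _ rW] by blast
        moreover have "xs \<noteq> []" using xs(1) is_path_def by auto
        ultimately show ?thesis using xs rN cA'[OF vA]
          by (intro exI[of _ "r # xs"]) auto
      next
        assume vB: "v \<in> B"
        then obtain xs where xs: "is_path B E xs" "last xs = v" "length xs = Suc (cB v)" "hd xs \<in> N"
          using sB unfolding struct_def by blast
        have "B \<subseteq> W" using WU by auto
        hence "is_path W E xs" using is_path_mono[OF xs(1)] by blast
        thus ?thesis using xs cB'[OF vB] by auto
      qed
    qed
    show ?thesis using s1 s2 s3 s4 s5 unfolding struct_def by blast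
  qed
qed

theorem theorem3p1:
  fixes V :: "'a set" and E :: "'a \<Rightarrow> 'a \<Rightarrow> bool"
  assumes "simple_graph V E"
  shows "star_chromatic V E \<le> longest_path V E"
proof -
  have finV: "finite V" and symE: "\<forall>u v. E u v \<longrightarrow> E v u" and irr: "\<forall>u. \<not> E u u"
    and EV: "\<forall>u v. E u v \<longrightarrow> u \<in> V \<and> v \<in> V"
    using assms unfolding simple_graph_def by auto
  have "\<forall>v\<in>V. \<exists>n\<in>V. reach E V v n" unfolding reach_def by auto
  then obtain c anc where s: "struct E V c anc V" using main[OF assms finV] by blast
  have S1: "\<And>u v. E u v \<Longrightarrow> anc u v \<or> anc v u" using s EV unfolding struct_def by blast
  have S2: "\<And>u v. anc u v \<Longrightarrow> c u < c v" using s unfolding struct_def by blast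
  have S3: "\<And>u v w. anc u w \<Longrightarrow> anc v w \<Longrightarrow> u = v \<or> anc u v \<or> anc v u" using s unfolding struct_def by blast
  have S4: "\<And>u v w. anc u v \<Longrightarrow> anc v w \<Longrightarrow> anc u w" using s unfolding struct_def by blast
  have S5: "\<And>v. v \<in> V \<Longrightarrow> \<exists>xs. is_path V E xs \<and> length xs = Suc (c v)" using s unfolding struct_def by blast
  let ?L = "{0} \<union> length ` {xs. is_path V E xs}"
  have "?L \<subseteq> {0..card V}"
  proof
    fix n assume "n \<in> ?L"
    then consider "n = 0" | xs where "is_path V E xs" "n = length xs" by auto
    thus "n \<in> {0..card V}"
    proof cases
      case (2 xs)
      hence "length xs = card (set xs)" "set xs \<subseteq> V" unfolding is_path_def by (auto simp: distinct_card)
      thus ?thesis using 2 card_mono[OF finV] by auto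
    qed auto
  qed
  hence finL: "finite ?L" using finite_subset by blast
  have propc: "\<And>u v. E u v \<Longrightarrow> c u \<noteq> c v" using S1 S2 by (metis less_irrefl)
  have L: "c b < c a" if "E a b" "E b d" "a \<noteq> d" "c a = c d" for a b d
  proof -
    have "anc a b \<or> anc b a" "anc d b \<or> anc b d" using S1 symE that by blast+
    moreover have "\<not> (anc a b \<and> anc d b)" using S3[of a b d] S2 that by fastforce
    moreover have "\<not> (anc a b \<and> anc b d)" using S4[of a b d] S2 that by fastforce
    moreover have "\<not> (anc d b \<and> anc b a)" using S4[of d b a] S2 that by fastforce
    ultimately have "anc b a" by blast
    thus ?thesis using S2 by blast
  qed
  have sc: "star_colouring V E c (longest_path V E)"
    unfolding star_colouring_def
  proof (intro conjI allI impI ballI)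
    fix v assume "v \<in> V"
    then obtain xs where "is_path V E xs" "length xs = Suc (c v)" using S5 by blast
    hence "Suc (c v) \<in> ?L" by (metis UnI2 image_eqI mem_Collect_eq)
    hence "Suc (c v) \<le> Max ?L" using finL by simp
    thus "c v < longest_path V E" unfolding longest_path_def by simp
  next
    fix u v assume "E u v" thus "c u \<noteq> c v" using propc by blast
  next
    fix xs assume h: "is_path V E xs \<and> length xs = 4"
    have "xs = [xs!0,xs!1,xs!2,xs!3]" using h
      by (intro nth_equalityI) (auto simp: less_Suc_eq numeral_eq_Suc nth_Cons split: nat.splits)
    then obtain x1 x2 x3 x4 where xs: "xs = [x1,x2,x3,x4]" by blast
    have e: "E x1 x2" "E x2 x3" "E x3 x4" using h xs unfolding is_path_def
      by (auto dest: spec[of _ 0] spec[of _ 1] spec[of _ 2])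
    have d: "x1 \<noteq> x3" "x2 \<noteq> x4" using h xs unfolding is_path_def by auto
    have p: "c x1 \<noteq> c x2" "c x2 \<noteq> c x3" "c x3 \<noteq> c x4" using e propc by auto
    have "c x1 \<noteq> c x3 \<or> c x2 \<noteq> c x4"
    proof (rule ccontr)
      assume "\<not> ?thesis"
      hence "c x1 = c x3" "c x2 = c x4" by auto
      hence "c x2 < c x1" "c x3 < c x2" using L[OF e(1) e(2) d(1)] L[OF e(2) e(3) d(2)] by auto
      thus False using \<open>c x1 = c x3\<close> by simp
    qed
    hence "\<exists>a b d. {a,b,d} \<subseteq> c ` set xs \<and> card {a,b,d} = 3"
    proof
      assume "c x1 \<noteq> c x3"
      thus ?thesis using p xs by (intro exI[of _ "c x1"] exI[of _ "c x2"] exI[of _ "c x3"]) auto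
    next
      assume "c x2 \<noteq> c x4"
      thus ?thesis using p xs by (intro exI[of _ "c x2"] exI[of _ "c x3"] exI[of _ "c x4"]) auto
    qed
    then obtain a b d where "{a,b,d} \<subseteq> c ` set xs" "card {a,b,d} = 3" by blast
    thus "3 \<le> card (c ` set xs)" by (metis card_mono finite_imageI finite_set)
  qed
  hence "\<exists>c. star_colouring V E c (longest_path V E)" by blast
  thus ?thesis unfolding star_chromatic_def by (rule Least_le)
qed

end
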